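(* Let $x\ne y$ be points of $\partial\mathbb{H}^2$ and let $r,s$ be two distinct vertices of the ladder $\mathcal{L}(x,y)$. Then $\mathcal{L}(r,s)\subseteq\mathcal{L}(x,y)$.
   Context: The Farey graph $\mathcal{F}$ has vertex set $\mathbb{Q}\cup\{\infty\}$ (vertices $p/q$ in lowest terms, $\infty=1/0$), with $p/q$ and $r/s$ adjacent iff $|ps-qr|=1$. It is embedded in $\overline{\mathbb{H}}=\mathbb{H}^2\cup\partial\mathbb{H}^2$ (upper half-plane model, $\partial\mathbb{H}^2=\mathbb{R}\cup\{\infty\}$) with edges realized as hyperbolic geodesics; the closures of the complementary regions are ideal triangles called Farey triangles. For distinct $x,y\in\partial\mathbb{H}^2$, the ladder $\mathcal{L}(x,y)$ is the union of all Farey triangles whose interior meets the hyperbolic geodesic from $x$ to $y$ (if $x,y$ are adjacent vertices this is empty). *)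

theory Defs
  imports Complex_Main
begin

text \<open>Boundary of the upper half-plane: \<open>real option\<close>, with \<open>None\<close> = \<infinity>.
  Points of the closed upper half-plane: \<open>complex option\<close>, with \<open>None\<close> = \<infinity>
  and \<open>Some z\<close> for \<open>Im z \<ge> 0\<close>.  Farey vertices: \<open>rat option\<close>, \<open>None\<close> = 1/0.\<close>

definition emb :: "rat option \<Rightarrow> real option" where
  "emb u = map_option of_rat u"

definition bd :: "real option \<Rightarrow> complex option" where
  "bd u = map_option complex_of_real u"

fun frac :: "rat option \<Rightarrow> int \<times> int" where
  "frac None = (1, 0)"
| "frac (Some q) = quotient_of q"

definition farey_adj :: "rat option \<Rightarrow> rat option \<Rightarrow> bool" where
  "farey_adj u v \<longleftrightarrow> (let (p, q) = frac u; (r, s) = frac v in \<bar>p * s - q * r\<bar> = 1)"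

definition farey_triangle :: "rat option \<Rightarrow> rat option \<Rightarrow> rat option \<Rightarrow> bool" where
  "farey_triangle u v w \<longleftrightarrow> farey_adj u v \<and> farey_adj v w \<and> farey_adj w u"

fun geod :: "real option \<Rightarrow> real option \<Rightarrow> complex set" where
  "geod (Some a) (Some b) =
     {z. Im z > 0 \<and> cmod (z - complex_of_real ((a + b) / 2)) = \<bar>a - b\<bar> / 2}"
| "geod (Some a) None = {z. Im z > 0 \<and> Re z = a}"
| "geod None (Some a) = {z. Im z > 0 \<and> Re z = a}"
| "geod None None = {}"

text \<open>Side function of the geodesic between two boundary points: its sign tells on which
  side of the geodesic a point of the closed half-plane lies (zero on the geodesic).\<close>
fun sd :: "real option \<Rightarrow> real option \<Rightarrow> complex option \<Rightarrow> real" where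
  "sd (Some a) (Some b) (Some z) =
     (cmod (z - complex_of_real ((a + b) / 2)))\<^sup>2 - ((a - b) / 2)\<^sup>2"
| "sd (Some a) (Some b) None = 1"
| "sd (Some a) None (Some z) = Re z - a"
| "sd None (Some a) (Some z) = Re z - a"
| "sd _ _ _ = 0"

definition tri_int :: "real option \<Rightarrow> real option \<Rightarrow> real option \<Rightarrow> complex set" where
  "tri_int u v w = {z. Im z > 0 \<and>
      sd u v (Some z) * sd u v (bd w) > 0 \<and>
      sd v w (Some z) * sd v w (bd u) > 0 \<and>
      sd w u (Some z) * sd w u (bd v) > 0}"

text \<open>Closed ideal triangle in the closed half-plane (closure of the interior in \<open>\<bbbH>\<^sup>2 \<union> \<partial>\<bbbH>\<^sup>2\<close>):
  the closure in \<open>\<bbbH>\<^sup>2\<close> together with the three ideal vertices.\<close>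
definition tri_closed :: "real option \<Rightarrow> real option \<Rightarrow> real option \<Rightarrow> complex option set" where
  "tri_closed u v w = Some ` {z. Im z > 0 \<and>
      sd u v (Some z) * sd u v (bd w) \<ge> 0 \<and>
      sd v w (Some z) * sd v w (bd u) \<ge> 0 \<and>
      sd w u (Some z) * sd w u (bd v) \<ge> 0} \<union> {bd u, bd v, bd w}"

definition ladder_triangles :: "real option \<Rightarrow> real option \<Rightarrow> (rat option \<times> rat option \<times> rat option) set" where
  "ladder_triangles x y = {(u, v, w). farey_triangle u v w \<and>
      tri_int (emb u) (emb v) (emb w) \<inter> geod x y \<noteq> {}}"

definition ladder :: "real option \<Rightarrow> real option \<Rightarrow> complex option set" where
  "ladder x y = (\<Union>(u, v, w) \<in> ladder_triangles x y. tri_closed (emb u) (emb v) (emb w))"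

definition ladder_vertices :: "real option \<Rightarrow> real option \<Rightarrow> rat option set" where
  "ladder_vertices x y = (\<Union>(u, v, w) \<in> ladder_triangles x y. {u, v, w})"

end

theory Submission
  imports Defs
begin



type_synonym v3 = "real \<times> real \<times> real"

fun det3 :: "v3 \<Rightarrow> v3 \<Rightarrow> v3 \<Rightarrow> real" where
  "det3 (a1,a2,a3) (b1,b2,b3) (c1,c2,c3) =
     a1*(b2*c3-b3*c2) - a2*(b1*c3-b3*c1) + a3*(b1*c2-b2*c1)"

fun lc :: "real \<Rightarrow> v3 \<Rightarrow> real \<Rightarrow> v3 \<Rightarrow> v3" where
  "lc l (a1,a2,a3) m (b1,b2,b3) = (l*a1+m*b1, l*a2+m*b2, l*a3+m*b3)"

fun lc3 :: "real \<Rightarrow> v3 \<Rightarrow> real \<Rightarrow> v3 \<Rightarrow> real \<Rightarrow> v3 \<Rightarrow> v3" where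
  "lc3 l (a1,a2,a3) m (b1,b2,b3) n (c1,c2,c3) =
     (l*a1+m*b1+n*c1, l*a2+m*b2+n*c2, l*a3+m*b3+n*c3)"

fun Bf :: "v3 \<Rightarrow> v3 \<Rightarrow> real" where
  "Bf (a1,a2,a3) (b1,b2,b3) = (a1*b3 + b1*a3)/2 - a2*b2"

fun Vb :: "real option \<Rightarrow> v3" where
  "Vb None = (1,0,0)"
| "Vb (Some t) = (t^2, t, 1)"

definition Pz :: "complex \<Rightarrow> v3" where
  "Pz z = ((Re z)^2 + (Im z)^2, Re z, 1)"

fun Vc :: "complex option \<Rightarrow> v3" where
  "Vc None = (1,0,0)"
| "Vc (Some z) = Pz z"

lemma det3_cyc: "det3 a b c = det3 b c a"
  by (cases a; cases b; cases c) (simp add: algebra_simps)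

lemma det3_swap: "det3 a b c = - det3 b a c"
  by (cases a; cases b; cases c) (simp add: algebra_simps)

lemma det3_lc: "det3 (lc l p m q) b c = l * det3 p b c + m * det3 q b c"
  by (cases p; cases q; cases b; cases c) (simp add: algebra_simps)

lemma det3_lc3: "det3 (lc3 l p m q n r) b c = l * det3 p b c + m * det3 q b c + n * det3 r b c"
  by (cases p; cases q; cases r; cases b; cases c) (simp add: algebra_simps)

lemma det3_same1: "det3 a a c = 0"
  by (cases a; cases c) (simp add: algebra_simps)

lemma det3_same2: "det3 a c a = 0"
  by (cases a; cases c) (simp add: algebra_simps)

lemma det3_same3: "det3 c a a = 0"
  by (cases a; cases c) (simp add: algebra_simps)

lemma Bf_sym: "Bf a b = Bf b a"
  by (cases a; cases b) (simp add: algebra_simps)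

lemma Bf_lc: "Bf (lc l p m q) b = l * Bf p b + m * Bf q b"
  by (cases p; cases q; cases b) (simp add: algebra_simps add_divide_distrib)

lemma Bf_lc3: "Bf (lc3 l p m q n r) b = l * Bf p b + m * Bf q b + n * Bf r b"
  by (cases p; cases q; cases r; cases b) (simp add: algebra_simps add_divide_distrib)

lemma cramer:
  assumes "det3 U V W \<noteq> 0"
  shows "X = lc3 (det3 X V W / det3 U V W) U (det3 U X W / det3 U V W) V (det3 U V X / det3 U V W) W"
proof -
  obtain u1 u2 u3 v1 v2 v3 w1 w2 w3 x1 x2 x3 where e: "U = (u1,u2,u3)" "V = (v1,v2,v3)" "W = (w1,w2,w3)" "X=(x1,x2,x3)"
    by (cases U; cases V; cases W; cases X) auto
  define D where "D = det3 U V W"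
  define d1 where "d1 = det3 X V W"
  define d2 where "d2 = det3 U X W"
  define d3 where "d3 = det3 U V X"
  have D0: "D \<noteq> 0" using assms D_def by simp
  have h: "D * x1 = d1 * u1 + d2 * v1 + d3 * w1"
   "D * x2 = d1 * u2 + d2 * v2 + d3 * w2"
   "D * x3 = d1 * u3 + d2 * v3 + d3 * w3"
    unfolding D_def d1_def d2_def d3_def using e by (simp_all add: algebra_simps)
  have g: "\<And>x p q r. D * x = d1 * p + d2 * q + d3 * r \<Longrightarrow> x = d1/D*p + d2/D*q + d3/D*r"
  proof -
    fix x p q r assume "D * x = d1 * p + d2 * q + d3 * r"
    then have "x = (d1 * p + d2 * q + d3 * r) / D" using D0 by (simp add: eq_divide_eq mult.commute)
    then show "x = d1/D*p + d2/D*q + d3/D*r" by (simp add: add_divide_distrib)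
  qed
  have "x1 = d1/D*u1 + d2/D*v1 + d3/D*w1" "x2 = d1/D*u2 + d2/D*v2 + d3/D*w2"
    "x3 = d1/D*u3 + d2/D*v3 + d3/D*w3"
    using g h by blast+
  then show ?thesis unfolding d1_def[symmetric] d2_def[symmetric] d3_def[symmetric] D_def[symmetric]
    using e by simp
qed

lemma Bf_Vb_same: "Bf (Vb a) (Vb a) = 0"
  by (cases a) (simp_all add: power2_eq_square)

lemma Bf_Vb_pos: "a \<noteq> b \<Longrightarrow> Bf (Vb a) (Vb b) > 0"
proof (cases a; cases b)
  fix x y assume "a \<noteq> b" "a = Some x" "b = Some y"
  then have "x \<noteq> y" by auto
  then have "(x - y)^2 > 0" by simp
  moreover have "Bf (Vb a) (Vb b) = (x-y)^2/2" using \<open>a = Some x\<close> \<open>b = Some y\<close>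
    by (simp add: power2_eq_square field_simps)
  ultimately show ?thesis by linarith
qed auto

lemma Bf_Vb_nonneg: "Bf (Vb a) (Vb b) \<ge> 0"
  by (cases "a = b") (auto simp: Bf_Vb_same intro: less_imp_le Bf_Vb_pos)

lemma det_Vb_nz:
  assumes "a \<noteq> b" "b \<noteq> c" "c \<noteq> a"
  shows "det3 (Vb a) (Vb b) (Vb c) \<noteq> 0"
proof (cases a; cases b; cases c)
  fix x y z assume h: "a = Some x" "b = Some y" "c = Some z"
  then have "x \<noteq> y" "y \<noteq> z" "z \<noteq> x" using assms by auto
  moreover have "det3 (Vb a) (Vb b) (Vb c) = (x-y)*(y-z)*(x-z)" using h
    by (simp add: power2_eq_square algebra_simps)
  ultimately show ?thesis by simp
qed (use assms in auto)




lemma Vc_bd: "Vc (bd w) = Vb w"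
  by (cases w) (simp_all add: bd_def Pz_def)

lemma cmod_sq: "(cmod z)^2 = (Re z)^2 + (Im z)^2"
  by (simp add: cmod_power2)

lemma cmod_shift_sq: "(cmod (z - complex_of_real c))^2 = (Re z - c)^2 + (Im z)^2"
  by (simp add: cmod_power2)

lemma sd_det: "a \<noteq> b \<Longrightarrow> \<exists>k. k \<noteq> 0 \<and> (\<forall>\<zeta>. sd a b \<zeta> = k * det3 (Vc \<zeta>) (Vb a) (Vb b))"
proof (cases a; cases b)
  fix s t assume h: "a = Some s" "b = Some t" "a \<noteq> b"
  then have st: "s - t \<noteq> 0" by auto
  have "\<forall>\<zeta>. sd a b \<zeta> = (1/(s-t)) * det3 (Vc \<zeta>) (Vb a) (Vb b)"
  proof
    fix \<zeta> show "sd a b \<zeta> = (1/(s-t)) * det3 (Vc \<zeta>) (Vb a) (Vb b)"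
    proof (cases \<zeta>)
      case None then show ?thesis using h st by simp
    next
      case (Some z)
      have "det3 (Vc \<zeta>) (Vb a) (Vb b) = (s-t) * ((Re z)^2 + (Im z)^2 - (s+t) * Re z + s*t)"
        using h Some by (simp add: Pz_def power2_eq_square algebra_simps)
      moreover have "sd a b \<zeta> = (Re z - (s+t)/2)^2 + (Im z)^2 - ((s-t)/2)^2"
        using h Some cmod_shift_sq[of z "(s+t)/2"] by simp
      moreover have "(Re z - (s+t)/2)^2 + (Im z)^2 - ((s-t)/2)^2 = (Re z)^2 + (Im z)^2 - (s+t) * Re z + s*t"
        by (simp add: power2_eq_square field_simps)
      ultimately show ?thesis using st by simp
    qed
  qed
  then show ?thesis using st by (intro exI[of _ "1/(s-t)"]) simp
next
  fix t assume h: "a = None" "b = Some t"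
  have "\<forall>\<zeta>. sd a b \<zeta> = (-1) * det3 (Vc \<zeta>) (Vb a) (Vb b)"
  proof
    fix \<zeta> show "sd a b \<zeta> = (-1) * det3 (Vc \<zeta>) (Vb a) (Vb b)"
      using h by (cases \<zeta>) (simp_all add: Pz_def)
  qed
  then show ?thesis by (intro exI[of _ "-1"]) simp
next
  fix t assume h: "a = Some t" "b = None"
  have "\<forall>\<zeta>. sd a b \<zeta> = 1 * det3 (Vc \<zeta>) (Vb a) (Vb b)"
  proof
    fix \<zeta> show "sd a b \<zeta> = 1 * det3 (Vc \<zeta>) (Vb a) (Vb b)"
      using h by (cases \<zeta>) (simp_all add: Pz_def)
  qed
  then show ?thesis by (intro exI[of _ "1"]) simp
qed auto

lemma sd_sign:
  assumes "a \<noteq> b"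
  shows "(sd a b \<zeta> * sd a b \<omega> > 0) = (det3 (Vc \<zeta>) (Vb a) (Vb b) * det3 (Vc \<omega>) (Vb a) (Vb b) > 0)"
proof -
  obtain k where k: "k \<noteq> 0" "\<forall>\<zeta>. sd a b \<zeta> = k * det3 (Vc \<zeta>) (Vb a) (Vb b)"
    using sd_det[OF assms] by blast
  have kk: "k * k > 0" using k(1) by (metis not_real_square_gt_zero)
  have "sd a b \<zeta> * sd a b \<omega> = (k*k) * (det3 (Vc \<zeta>) (Vb a) (Vb b) * det3 (Vc \<omega>) (Vb a) (Vb b))"
    using k(2) by (simp add: algebra_simps)
  then show ?thesis using kk by (simp add: zero_less_mult_iff)
qed

lemma tri_int_eq:
  assumes "u \<noteq> v" "v \<noteq> w" "w \<noteq> u"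
  shows "tri_int u v w = {z. Im z > 0 \<and>
     det3 (Pz z) (Vb u) (Vb v) * det3 (Vb w) (Vb u) (Vb v) > 0 \<and>
     det3 (Pz z) (Vb v) (Vb w) * det3 (Vb u) (Vb v) (Vb w) > 0 \<and>
     det3 (Pz z) (Vb w) (Vb u) * det3 (Vb v) (Vb w) (Vb u) > 0}"
  unfolding tri_int_def
  using sd_sign[OF assms(1)] sd_sign[OF assms(2)] sd_sign[OF assms(3)]
  by (simp add: Vc_bd)

lemma geod_sd: "a \<noteq> b \<Longrightarrow> geod a b = {z. Im z > 0 \<and> sd a b (Some z) = 0}"
proof (cases a; cases b)
  fix s t assume h: "a = Some s" "b = Some t"
  have "\<And>z. (cmod (z - complex_of_real ((s + t) / 2)) = \<bar>s - t\<bar> / 2) =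
     ((cmod (z - complex_of_real ((s + t) / 2)))\<^sup>2 - ((s - t) / 2)\<^sup>2 = 0)"
  proof -
    fix z
    have 1: "((s - t) / 2)\<^sup>2 = (\<bar>s - t\<bar> / 2)\<^sup>2" by (simp add: power2_eq_square)
    have 2: "(cmod (z - complex_of_real ((s + t) / 2)) = \<bar>s - t\<bar> / 2) =
      ((cmod (z - complex_of_real ((s + t) / 2)))\<^sup>2 = (\<bar>s - t\<bar> / 2)\<^sup>2)"
      by (rule power2_eq_iff_nonneg[symmetric]) auto
    show "(cmod (z - complex_of_real ((s + t) / 2)) = \<bar>s - t\<bar> / 2) =
     ((cmod (z - complex_of_real ((s + t) / 2)))\<^sup>2 - ((s - t) / 2)\<^sup>2 = 0)"
      unfolding 2 1 by (rule eq_iff_diff_eq_0)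
  qed
  note eqv = this
  have e1: "geod a b = {z. Im z > 0 \<and> cmod (z - complex_of_real ((s + t) / 2)) = \<bar>s - t\<bar> / 2}"
    using h by (simp only: geod.simps)
  have e2: "{z. Im z > 0 \<and> sd a b (Some z) = 0} = {z. Im z > 0 \<and> ((cmod (z - complex_of_real ((s + t) / 2)))\<^sup>2 - ((s - t) / 2)\<^sup>2 = 0)}"
    using h by (simp only: sd.simps)
  show ?thesis unfolding e1 e2 using eqv by blast
qed auto

lemma geod_eq:
  assumes "a \<noteq> b"
  shows "geod a b = {z. Im z > 0 \<and> det3 (Pz z) (Vb a) (Vb b) = 0}"
proof -
  obtain k where k: "k \<noteq> 0" "\<forall>\<zeta>. sd a b \<zeta> = k * det3 (Vc \<zeta>) (Vb a) (Vb b)"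
    using sd_det[OF assms] by blast
  show ?thesis unfolding geod_sd[OF assms] using k by auto
qed

lemma geod_param:
  assumes "a \<noteq> b" "z \<in> geod a b"
  shows "\<exists>l m. l > 0 \<and> m > 0 \<and> Pz z = lc l (Vb a) m (Vb b)"
proof -
  have z: "Im z > 0" "sd a b (Some z) = 0" using assms geod_sd by auto
  show ?thesis
  proof (cases a; cases b)
    fix s t assume h: "a = Some s" "b = Some t"
    then have st: "s - t \<noteq> 0" using assms by auto
    define X where "X = Re z"
    define Y where "Y = Im z"
    have Y: "Y > 0" using z X_def Y_def by simp
    have "(Re z - (s+t)/2)^2 + (Im z)^2 - ((s-t)/2)^2 = 0"
      using z h cmod_shift_sq[of z "(s+t)/2"] by simp
    moreover have "(Re z - (s+t)/2)^2 + (Im z)^2 - ((s-t)/2)^2 = (Re z)^2 + (Im z)^2 - (s+t) * Re z + s*t"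
      by (simp add: power2_eq_square field_simps)
    ultimately have eq: "X^2 + Y^2 - (s+t)*X + s*t = 0" unfolding X_def Y_def by simp
    define l where "l = (X - t)/(s-t)"
    define m where "m = (s - X)/(s-t)"
    have "l + m = ((X - t) + (s - X))/(s-t)" unfolding l_def m_def by (rule add_divide_distrib[symmetric])
    also have "\<dots> = 1" using st by simp
    finally have lm1: "l + m = 1" .
    have "(X - t) * (s - X) = Y^2" using eq by (simp add: power2_eq_square algebra_simps)
    then have "(X - t) * (s - X) > 0" using Y by simp
    moreover have "(s-t)*(s-t) > 0" using st by (metis not_real_square_gt_zero)
    moreover have "l * m = ((X - t) * (s - X)) / ((s-t)*(s-t))" unfolding l_def m_def by simp
    ultimately have "l * m > 0" by simp
    then have lp: "l > 0" "m > 0" using lm1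
      by (auto simp: zero_less_mult_iff)
    have c1: "l * s^2 + m * t^2 = X^2 + Y^2"
    proof -
      have n: "(X-t)*s^2 + (s-X)*t^2 = (X*(s+t) - s*t)*(s-t)"
        by (simp add: power2_eq_square algebra_simps)
      have "l * s^2 + m * t^2 = ((X-t)*s^2 + (s-X)*t^2)/(s-t)" unfolding l_def m_def
        by (simp add: add_divide_distrib)
      also have "\<dots> = X*(s+t) - s*t" unfolding n using st by simp
      finally show ?thesis using eq by (simp add: algebra_simps)
    qed
    have c2: "l * s + m * t = X"
    proof -
      have "l * s + m * t = ((X - t) * s + (s - X) * t)/(s-t)" unfolding l_def m_def
        by (simp add: add_divide_distrib)
      also have "(X - t) * s + (s - X) * t = X * (s - t)" by (simp add: algebra_simps)
      finally show ?thesis using st by simp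
    qed
    have "Pz z = lc l (Vb a) m (Vb b)"
      using h c1 c2 lm1 unfolding Pz_def X_def Y_def by simp
    then show ?thesis using lp by blast
  next
    fix t assume h: "a = None" "b = Some t"
    then have "Pz z = lc ((Im z)^2) (Vb a) 1 (Vb b)" using z by (simp add: Pz_def)
    then show ?thesis using z by (intro exI[of _ "(Im z)^2"] exI[of _ 1]) simp
  next
    fix t assume h: "a = Some t" "b = None"
    then have "Pz z = lc 1 (Vb a) ((Im z)^2) (Vb b)" using z by (simp add: Pz_def)
    then show ?thesis using z by (intro exI[of _ 1] exI[of _ "(Im z)^2"]) simp
  qed (use assms in auto)
qed




lemma crux:
  fixes ae af ag be bf bg ce cf cg :: real
  assumes "ce>0" "cf>0" "cg>0"
    "ae*af*cg + af*ag*ce + ag*ae*cf = 0" "be*bf*cg + bf*bg*ce + bg*be*cf = 0"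
    "af*cg + ag*cf \<ge> 0" "be*cg + bg*ce \<ge> 0" "ae>0" "be\<le>0" "af<0" "bf>0"
  shows "ae*bf - af*be > 0"
proof (cases "be = 0")
  case True then show ?thesis using assms by simp
next
  case False
  then have be: "be < 0" using assms by simp
  have "af*cg < 0" using assms by (simp add: mult_neg_pos)
  then have "ag*cf > 0" using assms by linarith
  then have ag: "ag > 0" using assms by (simp add: zero_less_mult_iff)
  have "be*cg < 0" using assms be by (simp add: mult_neg_pos)
  then have "bg*ce > 0" using assms by linarith
  then have bg: "bg > 0" using assms by (simp add: zero_less_mult_iff)
  define P1 where "P1 = ae*cg + ag*ce"
  define P2 where "P2 = bf*cg + bg*cf"
  have P1: "P1 > 0" unfolding P1_def using assms ag by (simp add: add_pos_pos)
  have P2: "P2 > 0" unfolding P2_def using assms bg by (simp add: add_pos_pos)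
  have h1: "af*P1 = -(ag*ae*cf)" unfolding P1_def using assms(4) by (simp add: algebra_simps)
  have h2: "be*P2 = -(bf*bg*ce)" unfolding P2_def using assms(5) by (simp add: algebra_simps)
  have "(af*be)*(P1*P2) = (af*P1)*(be*P2)" by (simp add: algebra_simps)
  also have "\<dots> = ae*bf*(ag*bg*ce*cf)" using h1 h2 by (simp add: algebra_simps)
  finally have e1: "(af*be)*(P1*P2) = ae*bf*(ag*bg*ce*cf)" .
  have e2: "P1*P2 - ag*bg*ce*cf = ae*bf*cg*cg + ae*bg*cg*cf + ag*bf*ce*cg"
    unfolding P1_def P2_def by (simp add: algebra_simps)
  have "ae*bf*cg*cg > 0" using assms by simp
  moreover have "ae*bg*cg*cf > 0" using assms bg by simp
  moreover have "ag*bf*ce*cg > 0" using assms ag by simp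
  ultimately have "P1*P2 - ag*bg*ce*cf > 0" using e2 by linarith
  then have "ae*bf*(P1*P2 - ag*bg*ce*cf) > 0" using assms by simp
  then have "(ae*bf - af*be)*(P1*P2) > 0" using e1 by (simp add: algebra_simps)
  moreover have "P1*P2 > 0" using P1 P2 by simp
  ultimately show ?thesis by (simp add: zero_less_mult_iff)
qed

lemma lp:
  fixes a b :: "nat \<Rightarrow> real"
  assumes fin: "finite I" and d: "\<forall>i\<in>I. a i > 0 \<or> b i > 0"
    and c: "\<forall>i\<in>I. \<forall>j\<in>I. a i > 0 \<longrightarrow> b i \<le> 0 \<longrightarrow> a j < 0 \<longrightarrow> b j > 0 \<longrightarrow> a i * b j - a j * b i > 0"
  shows "\<exists>t>0. \<forall>i\<in>I. t * a i + b i > 0"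
proof -
  define L where "L = Max (insert 0 ((\<lambda>i. - b i / a i) ` {i\<in>I. a i > 0}))"
  define U where "U = Min (insert (L+1) ((\<lambda>i. b i / - a i) ` {i\<in>I. a i < 0}))"
  have finL: "finite (insert 0 ((\<lambda>i. - b i / a i) ` {i\<in>I. a i > 0}))" using fin by simp
  have finU: "finite (insert (L+1) ((\<lambda>i. b i / - a i) ` {i\<in>I. a i < 0}))" using fin by simp
  have L0: "L \<ge> 0" unfolding L_def using finL by simp
  have Li: "- b i / a i \<le> L" if "i \<in> I" "a i > 0" for i
    unfolding L_def using finL that by (intro Max_ge) auto
  have Ui: "U \<le> b i / - a i" if "i \<in> I" "a i < 0" for i
    unfolding U_def using finU that by (intro Min_le) auto
  have LU: "L < U"
  proof -
    have "\<forall>x \<in> insert (L+1) ((\<lambda>i. b i / - a i) ` {i\<in>I. a i < 0}). L < x"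
    proof
      fix x assume "x \<in> insert (L+1) ((\<lambda>i. b i / - a i) ` {i\<in>I. a i < 0})"
      then consider "x = L + 1" | i where "i \<in> I" "a i < 0" "x = b i / - a i" by auto
      then show "L < x"
      proof cases
        case 1 then show ?thesis by simp
      next
        case 2
        have bi: "b i > 0" using d 2 by force
        have "\<forall>y \<in> insert 0 ((\<lambda>i. - b i / a i) ` {i\<in>I. a i > 0}). y < x"
        proof
          fix y assume "y \<in> insert 0 ((\<lambda>i. - b i / a i) ` {i\<in>I. a i > 0})"
          then consider "y = 0" | j where "j \<in> I" "a j > 0" "y = - b j / a j" by auto
          then show "y < x"
          proof cases
            case 1 then show ?thesis using 2 bi by (simp add: divide_pos_neg)
          next
            case j: 2
            show ?thesis
            proof (cases "b j > 0")
              case True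
              then have "y < 0" using j by (simp add: divide_neg_pos)
              moreover have "x > 0" using 2 bi by (simp add: divide_pos_neg)
              ultimately show ?thesis by simp
            next
              case False
              then have "a j * b i - a i * b j > 0" using c j 2 bi by auto
              then have "- b j * (- a i) < b i * a j" by (simp add: algebra_simps)
              have pos: "a j * (- a i) > 0" using j(2) 2(2) by (intro mult_pos_pos) auto
              have "y * (a j * (- a i)) = a i * b j" using j by simp
              moreover have "x * (a j * (- a i)) = a j * b i" using 2 by simp
              ultimately have "y * (a j * (- a i)) < x * (a j * (- a i))"
                using \<open>a j * b i - a i * b j > 0\<close> by simp
              then show ?thesis using pos mult_less_cancel_right_pos by blast
            qed
          qed
        qed
        then show ?thesis unfolding L_def using finL by (subst Max_less_iff) auto
      qed
    qed
    then show ?thesis unfolding U_def using finU by (subst Min_gr_iff) auto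
  qed
  define t where "t = (L + U)/2"
  have t: "L < t" "t < U" "t > 0" using LU L0 unfolding t_def by auto
  have "\<forall>i\<in>I. t * a i + b i > 0"
  proof
    fix i assume i: "i \<in> I"
    consider "a i > 0" | "a i = 0" | "a i < 0" by linarith
    then show "t * a i + b i > 0"
    proof cases
      case 1
      have "- b i / a i < t" using Li[OF i 1] t by simp
      then have "- b i / a i * a i < t * a i" using 1 by (rule mult_strict_right_mono)
      then show ?thesis using 1 by simp
    next
      case 2 then show ?thesis using d i by auto
    next
      case 3
      have "t < b i / - a i" using Ui[OF i 3] t by simp
      then have "t * (- a i) < b i / - a i * (- a i)" using 3 by (intro mult_strict_right_mono) auto
      then show ?thesis using 3 by simp
    qed
  qed
  then show ?thesis using t by blast
qed




lemma alg:
  fixes a1 a2 a3 b1 b2 b3 c1 c2 c3 :: real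
  assumes c: "c1>0" "c2>0" "c3>0"
    and ca: "a1*a2*c3 + a2*a3*c1 + a3*a1*c2 = 0" and cb: "b1*b2*c3 + b2*b3*c1 + b3*b1*c2 = 0"
    and A1: "a2*c3 + a3*c2 \<ge> 0" and A2: "a1*c3 + a3*c1 \<ge> 0" and A3: "a1*c2 + a2*c1 \<ge> 0"
    and B1: "b2*c3 + b3*c2 \<ge> 0" and B2: "b1*c3 + b3*c1 \<ge> 0" and B3: "b1*c2 + b2*c1 \<ge> 0"
    and d: "a1>0 \<or> b1>0" "a2>0 \<or> b2>0" "a3>0 \<or> b3>0"
  shows "\<exists>t>0. t*a1+b1>0 \<and> t*a2+b2>0 \<and> t*a3+b3>0"
proof -
  have k12: "a1*b2 - a2*b1 > 0" if "a1>0" "b1\<le>0" "a2<0" "b2>0"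
    apply (rule crux[of c1 c2 c3 a1 a2 a3 b1 b2 b3])
    using c ca cb A1 B2 that by (simp_all add: algebra_simps)
  have k13: "a1*b3 - a3*b1 > 0" if "a1>0" "b1\<le>0" "a3<0" "b3>0"
    apply (rule crux[of c1 c3 c2 a1 a3 a2 b1 b3 b2])
    using c ca cb A1 B3 that by (simp_all add: algebra_simps)
  have k21: "a2*b1 - a1*b2 > 0" if "a2>0" "b2\<le>0" "a1<0" "b1>0"
    apply (rule crux[of c2 c1 c3 a2 a1 a3 b2 b1 b3])
    using c ca cb A2 B1 that by (simp_all add: algebra_simps)
  have k23: "a2*b3 - a3*b2 > 0" if "a2>0" "b2\<le>0" "a3<0" "b3>0"
    apply (rule crux[of c2 c3 c1 a2 a3 a1 b2 b3 b1])
    using c ca cb A2 B3 that by (simp_all add: algebra_simps)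
  have k31: "a3*b1 - a1*b3 > 0" if "a3>0" "b3\<le>0" "a1<0" "b1>0"
    apply (rule crux[of c3 c1 c2 a3 a1 a2 b3 b1 b2])
    using c ca cb A3 B1 that by (simp_all add: algebra_simps)
  have k32: "a3*b2 - a2*b3 > 0" if "a3>0" "b3\<le>0" "a2<0" "b2>0"
    apply (rule crux[of c3 c2 c1 a3 a2 a1 b3 b2 b1])
    using c ca cb A3 B2 that by (simp_all add: algebra_simps)
  define a where "a = (\<lambda>i::nat. if i = 0 then a1 else if i = 1 then a2 else a3)"
  define b where "b = (\<lambda>i::nat. if i = 0 then b1 else if i = 1 then b2 else b3)"
  have "\<exists>t>0. \<forall>i\<in>{0,1,2}. t * a i + b i > 0"
  proof (rule lp)
    show "\<forall>i\<in>{0,1,2}. a i > 0 \<or> b i > 0" using d unfolding a_def b_def by auto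
    show "\<forall>i\<in>{0,1,2}. \<forall>j\<in>{0,1,2}. a i > 0 \<longrightarrow> b i \<le> 0 \<longrightarrow> a j < 0 \<longrightarrow> b j > 0 \<longrightarrow> a i * b j - a j * b i > 0"
      unfolding a_def b_def using k12 k13 k21 k23 k31 k32 by auto
  qed simp
  then obtain t where "t > 0" "\<forall>i\<in>{0,1,2}. t * a i + b i > 0" by blast
  then have "t * a 0 + b 0 > 0" "t * a 1 + b 1 > 0" "t * a 2 + b 2 > 0" by auto
  then have "t*a1+b1>0 \<and> t*a2+b2>0 \<and> t*a3+b3>0" unfolding a_def b_def by simp
  then show ?thesis using \<open>t > 0\<close> by blast
qed



lemma bary:
  assumes "Bf U U = 0" "Bf V V = 0" "Bf W W = 0" "X = lc3 a1 U a2 V a3 W" "Bf X X = 0"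
  shows "a1*a2*Bf U V + a2*a3*Bf V W + a3*a1*Bf W U = 0"
    and "Bf X U = a2*Bf U V + a3*Bf W U"
    and "Bf X V = a1*Bf U V + a3*Bf V W"
    and "Bf X W = a1*Bf W U + a2*Bf V W"
proof -
  show XU: "Bf X U = a2*Bf U V + a3*Bf W U"
    using assms by (simp add: Bf_lc3 Bf_sym[of V U])
  show XV: "Bf X V = a1*Bf U V + a3*Bf V W"
    using assms by (simp add: Bf_lc3 Bf_sym[of W V])
  show XW: "Bf X W = a1*Bf W U + a2*Bf V W"
    using assms by (simp add: Bf_lc3 Bf_sym[of U W])
  have "Bf X X = a1 * Bf U X + a2 * Bf V X + a3 * Bf W X"
    using assms(4) Bf_lc3 by metis
  also have "\<dots> = a1 * Bf X U + a2 * Bf X V + a3 * Bf X W" by (simp add: Bf_sym)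
  also have "\<dots> = 2 * (a1*a2*Bf U V + a2*a3*Bf V W + a3*a1*Bf W U)"
    unfolding XU XV XW by (simp add: algebra_simps)
  finally show "a1*a2*Bf U V + a2*a3*Bf V W + a3*a1*Bf W U = 0" using assms(5) by simp
qed

lemma div_sign: "D \<noteq> 0 \<Longrightarrow> ((d::real)/D > 0) = (d*D > 0)"
  by (simp add: zero_less_divide_iff zero_less_mult_iff)

lemma p3pos: "a \<noteq> b \<Longrightarrow> t > 0 \<Longrightarrow> lc t (Vb a) 1 (Vb b) = (p1,p2,p3) \<Longrightarrow> p3 > 0"
  by (cases a; cases b) auto

lemma lc_scale: "lc l X m Y = (p1,p2,p3) \<Longrightarrow> lc (l/c) X (m/c) Y = (p1/c,p2/c,p3/c)"
  by (cases X; cases Y) (auto simp: add_divide_distrib)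

lemma Bf_lc_r: "Bf p (lc l q m r) = l * Bf p q + m * Bf p r"
  using Bf_lc Bf_sym by metis




lemma hard:
  assumes ab: "a \<noteq> b" and dist: "u \<noteq> v" "v \<noteq> w" "w \<noteq> u"
    and h1: "det3 (Vb a) (Vb v) (Vb w) * det3 (Vb u) (Vb v) (Vb w) > 0 \<or> det3 (Vb b) (Vb v) (Vb w) * det3 (Vb u) (Vb v) (Vb w) > 0"
    and h2: "det3 (Vb a) (Vb w) (Vb u) * det3 (Vb v) (Vb w) (Vb u) > 0 \<or> det3 (Vb b) (Vb w) (Vb u) * det3 (Vb v) (Vb w) (Vb u) > 0"
    and h3: "det3 (Vb a) (Vb u) (Vb v) * det3 (Vb w) (Vb u) (Vb v) > 0 \<or> det3 (Vb b) (Vb u) (Vb v) * det3 (Vb w) (Vb u) (Vb v) > 0"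
  shows "tri_int u v w \<inter> geod a b \<noteq> {}"
proof -
  have nz: "det3 (Vb u) (Vb v) (Vb w) \<noteq> 0" using det_Vb_nz dist by blast
  have BU: "Bf (Vb u) (Vb u) = 0" and BV: "Bf (Vb v) (Vb v) = 0" and BW: "Bf (Vb w) (Vb w) = 0"
    and BX: "Bf (Vb a) (Vb a) = 0" and BY: "Bf (Vb b) (Vb b) = 0" by (simp_all add: Bf_Vb_same)
  have c1: "Bf (Vb v) (Vb w) > 0" and c2: "Bf (Vb w) (Vb u) > 0" and c3: "Bf (Vb u) (Vb v) > 0"
    using dist by (simp_all add: Bf_Vb_pos)
  have BXY: "Bf (Vb a) (Vb b) > 0" using ab by (simp add: Bf_Vb_pos)
  have nnXU: "Bf (Vb a) (Vb u) \<ge> 0" "Bf (Vb a) (Vb v) \<ge> 0" "Bf (Vb a) (Vb w) \<ge> 0"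
    "Bf (Vb b) (Vb u) \<ge> 0" "Bf (Vb b) (Vb v) \<ge> 0" "Bf (Vb b) (Vb w) \<ge> 0"
    by (simp_all add: Bf_Vb_nonneg)
  define U where "U = Vb u"
  define V where "V = Vb v"
  define W where "W = Vb w"
  define X where "X = Vb a"
  define Y where "Y = Vb b"
  define D where "D = det3 U V W"
  have D0: "D \<noteq> 0" using nz unfolding D_def U_def V_def W_def .
  have Dc1: "det3 V W U = D" unfolding D_def by (rule det3_cyc[symmetric])
  have Dc2: "det3 W U V = D" unfolding D_def using det3_cyc[of U V W] det3_cyc[of V W U] by simp
  have cX: "det3 U X W = det3 X W U" "det3 U V X = det3 X U V"
    using det3_cyc[of U X W] det3_cyc[of U V X] det3_cyc[of V X U] by simp_all
  have cY: "det3 U Y W = det3 Y W U" "det3 U V Y = det3 Y U V"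
    using det3_cyc[of U Y W] det3_cyc[of U V Y] det3_cyc[of V Y U] by simp_all
  define a1 where "a1 = det3 X V W / D"
  define a2 where "a2 = det3 X W U / D"
  define a3 where "a3 = det3 X U V / D"
  define b1 where "b1 = det3 Y V W / D"
  define b2 where "b2 = det3 Y W U / D"
  define b3 where "b3 = det3 Y U V / D"
  have eX: "X = lc3 a1 U a2 V a3 W"
    unfolding a1_def a2_def a3_def cX[symmetric] D_def by (rule cramer) (use D0 D_def in simp)
  have eY: "Y = lc3 b1 U b2 V b3 W"
    unfolding b1_def b2_def b3_def cY[symmetric] D_def by (rule cramer) (use D0 D_def in simp)
  note ba = bary[OF BU[folded U_def] BV[folded V_def] BW[folded W_def] eX BX[folded X_def]]
  note bb = bary[OF BU[folded U_def] BV[folded V_def] BW[folded W_def] eY BY[folded Y_def]]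
  have "\<exists>t>0. t*a1+b1>0 \<and> t*a2+b2>0 \<and> t*a3+b3>0"
  proof (rule alg[of "Bf V W" "Bf W U" "Bf U V"])
    show "Bf V W > 0" "Bf W U > 0" "Bf U V > 0" using c1 c2 c3 unfolding U_def V_def W_def by auto
    show "a1 * a2 * Bf U V + a2 * a3 * Bf V W + a3 * a1 * Bf W U = 0" using ba(1) .
    show "b1 * b2 * Bf U V + b2 * b3 * Bf V W + b3 * b1 * Bf W U = 0" using bb(1) .
    show "a2 * Bf U V + a3 * Bf W U \<ge> 0" "a1 * Bf U V + a3 * Bf V W \<ge> 0" "a1 * Bf W U + a2 * Bf V W \<ge> 0"
      using ba(2-4) nnXU(1-3) unfolding U_def V_def W_def X_def by auto
    show "b2 * Bf U V + b3 * Bf W U \<ge> 0" "b1 * Bf U V + b3 * Bf V W \<ge> 0" "b1 * Bf W U + b2 * Bf V W \<ge> 0"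
      using bb(2-4) nnXU(4-6) unfolding U_def V_def W_def Y_def by auto
    show "a1>0 \<or> b1>0" using h1 D0 unfolding a1_def b1_def D_def U_def V_def W_def X_def Y_def
      by (simp add: div_sign)
    show "a2>0 \<or> b2>0" using h2 D0 Dc1 unfolding a2_def b2_def D_def U_def V_def W_def X_def Y_def
      by (simp add: div_sign)
    show "a3>0 \<or> b3>0" using h3 D0 Dc2 unfolding a3_def b3_def D_def U_def V_def W_def X_def Y_def
      by (simp add: div_sign)
  qed
  then obtain t where t: "t > 0" "t*a1+b1>0" "t*a2+b2>0" "t*a3+b3>0" by blast
  obtain p1 p2 p3 where P: "lc t X 1 Y = (p1,p2,p3)" by (cases "lc t X 1 Y") auto
  have p3: "p3 > 0" using p3pos[OF ab t(1)] P unfolding X_def Y_def by blast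
  have "Bf (lc t X 1 Y) (lc t X 1 Y) = 2 * t * Bf X Y"
    using BX BY unfolding X_def Y_def by (simp add: Bf_lc Bf_lc_r Bf_sym[of "Vb b" "Vb a"] algebra_simps)
  then have "Bf (p1,p2,p3) (p1,p2,p3) > 0" using P t(1) BXY unfolding X_def Y_def by simp
  then have q: "p1*p3 - p2^2 > 0" by (simp add: power2_eq_square)
  have q2: "p1/p3 - (p2/p3)^2 = (p1*p3 - p2^2)/p3^2" using p3 by (simp add: field_simps power2_eq_square)
  have qpos: "p1/p3 - (p2/p3)^2 > 0" unfolding q2 using q p3 by simp
  define z where "z = Complex (p2/p3) (sqrt (p1/p3 - (p2/p3)^2))"
  have zim: "Im z > 0" unfolding z_def using qpos by simp
  have "Pz z = (p1/p3, p2/p3, 1)" unfolding z_def Pz_def using qpos p3 by simp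
  also have "\<dots> = lc (t/p3) X (1/p3) Y" using lc_scale[OF P, of p3] p3 by simp
  finally have Pzz: "Pz z = lc (t/p3) X (1/p3) Y" .
  have dX1: "det3 X V W = a1 * D" and dX2: "det3 X W U = a2 * D" and dX3: "det3 X U V = a3 * D"
    and dY1: "det3 Y V W = b1 * D" and dY2: "det3 Y W U = b2 * D" and dY3: "det3 Y U V = b3 * D"
    unfolding a1_def a2_def a3_def b1_def b2_def b3_def using D0 by simp_all
  have DD: "D * D > 0" using D0 by (metis not_real_square_gt_zero)
  have "det3 (Pz z) V W * D = (D * D / p3) * (t*a1+b1)"
    unfolding Pzz det3_lc dX1 dY1 using p3 by (simp add: field_simps)
  then have s1: "det3 (Pz z) V W * D > 0" using DD p3 t by simp
  have "det3 (Pz z) W U * D = (D * D / p3) * (t*a2+b2)"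
    unfolding Pzz det3_lc dX2 dY2 using p3 by (simp add: field_simps)
  then have s2: "det3 (Pz z) W U * D > 0" using DD p3 t by simp
  have "det3 (Pz z) U V * D = (D * D / p3) * (t*a3+b3)"
    unfolding Pzz det3_lc dX3 dY3 using p3 by (simp add: field_simps)
  then have s3: "det3 (Pz z) U V * D > 0" using DD p3 t by simp
  have g: "det3 (Pz z) X Y = 0" unfolding Pzz det3_lc by (simp add: det3_same1 det3_same2)
  have "z \<in> tri_int u v w" using tri_int_eq[OF dist] zim s1 s2 s3 Dc1 Dc2
    unfolding D_def U_def V_def W_def by simp
  moreover have "z \<in> geod a b" using geod_eq[OF ab] zim g unfolding X_def Y_def by simp
  ultimately show ?thesis by blast
qed




fun sc :: "real \<Rightarrow> v3 \<Rightarrow> v3" where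
  "sc c (x1,x2,x3) = (c*x1, c*x2, c*x3)"

fun Wf :: "int \<times> int \<Rightarrow> v3" where
  "Wf (p,q) = (of_int p ^ 2, of_int p * of_int q, of_int q ^ 2)"

fun wedge :: "int \<times> int \<Rightarrow> int \<times> int \<Rightarrow> int" where
  "wedge (a,b) (c,d) = a*d - b*c"

fun cw :: "rat option \<Rightarrow> real" where
  "cw None = 1"
| "cw (Some r) = 1 / (of_int (snd (quotient_of r)))^2"

lemma cw_pos: "cw u > 0"
proof (cases u)
  case (Some r)
  have "snd (quotient_of r) > 0" by (rule quotient_of_denom_pos')
  then show ?thesis using Some by simp
qed simp

lemma Vb_emb: "Vb (emb u) = sc (cw u) (Wf (frac u))"
proof (cases u)
  case None then show ?thesis by (simp add: emb_def)
next
  case (Some r)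
  obtain n d where nd: "quotient_of r = (n,d)" by (cases "quotient_of r") auto
  have d: "d > 0" using quotient_of_denom_pos[OF nd] .
  have r: "r = of_int n / of_int d" using quotient_of_div[OF nd] .
  have "of_rat r = (of_int n / of_int d :: real)" unfolding r by (simp add: of_rat_divide)
  then show ?thesis using Some nd d by (simp add: emb_def power2_eq_square field_simps)
qed

lemma det3_sc: "det3 (sc a x) (sc b y) (sc c z) = a*b*c*det3 x y z"
  by (cases x; cases y; cases z) (simp add: algebra_simps)

lemma det3_Wf: "det3 (Wf P) (Wf Q) (Wf R) = of_int (wedge P Q * wedge P R * wedge Q R)"
  by (cases P; cases Q; cases R) (simp add: power2_eq_square algebra_simps)

lemma plucker: "wedge P Q * wedge U V = wedge P U * wedge Q V - wedge P V * wedge Q U"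
  by (cases P; cases Q; cases U; cases V) (simp add: algebra_simps)

lemma int_prod_nonneg: "\<bar>A - B\<bar> = (1::int) \<Longrightarrow> A * B \<ge> 0"
proof (rule ccontr)
  assume h: "\<bar>A - B\<bar> = 1" "\<not> A * B \<ge> 0"
  then have "(A > 0 \<and> B < 0) \<or> (A < 0 \<and> B > 0)" by (auto simp: zero_le_mult_iff not_le)
  then show False using h(1) by auto
qed

lemma adj_wedge: "farey_adj u v = (\<bar>wedge (frac u) (frac v)\<bar> = 1)"
  unfolding farey_adj_def by (cases "frac u"; cases "frac v") simp

lemma adj_sym: "farey_adj u v \<Longrightarrow> farey_adj v u"
  unfolding adj_wedge by (cases "frac u"; cases "frac v") (simp, metis abs_minus_commute mult.commute)

lemma adj_neq: "farey_adj u v \<Longrightarrow> emb u \<noteq> emb v"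
proof
  assume "farey_adj u v" "emb u = emb v"
  then have "u = v" unfolding emb_def by (cases u; cases v) auto
  then show False using \<open>farey_adj u v\<close> unfolding adj_wedge by (cases "frac v") simp
qed

lemma noncross:
  assumes "farey_adj p q" "farey_adj u v"
  shows "det3 (Vb (emb p)) (Vb (emb u)) (Vb (emb v)) * det3 (Vb (emb q)) (Vb (emb u)) (Vb (emb v)) \<ge> 0"
proof -
  define P where "P = frac p"
  define Q where "Q = frac q"
  define U where "U = frac u"
  define V where "V = frac v"
  have pq: "\<bar>wedge P Q\<bar> = 1" and uv: "\<bar>wedge U V\<bar> = 1" using assms unfolding adj_wedge P_def Q_def U_def V_def by auto
  have "\<bar>wedge P U * wedge Q V - wedge P V * wedge Q U\<bar> = 1"
    unfolding plucker[symmetric] using pq uv by (simp add: abs_mult)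
  then have AB: "(wedge P U * wedge Q V) * (wedge P V * wedge Q U) \<ge> 0" by (rule int_prod_nonneg)
  have "(wedge P U * wedge P V * wedge U V) * (wedge Q U * wedge Q V * wedge U V)
      = ((wedge P U * wedge Q V) * (wedge P V * wedge Q U)) * (wedge U V * wedge U V)"
    by (simp add: algebra_simps)
  also have "\<dots> \<ge> 0" using AB by simp
  finally have I: "(wedge P U * wedge P V * wedge U V) * (wedge Q U * wedge Q V * wedge U V) \<ge> 0" .
  have "det3 (Vb (emb p)) (Vb (emb u)) (Vb (emb v)) * det3 (Vb (emb q)) (Vb (emb u)) (Vb (emb v))
      = (cw p * cw u * cw v) * (cw q * cw u * cw v) *
        of_int ((wedge P U * wedge P V * wedge U V) * (wedge Q U * wedge Q V * wedge U V))"
    unfolding Vb_emb det3_sc det3_Wf P_def Q_def U_def V_def by simp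
  also have "\<dots> \<ge> 0"
  proof -
    have I': "real_of_int ((wedge P U * wedge P V * wedge U V) * (wedge Q U * wedge Q V * wedge U V)) \<ge> 0"
      using I by (simp only: of_int_0_le_iff)
    have cc: "(cw p * cw u * cw v) * (cw q * cw u * cw v) \<ge> 0"
      using cw_pos[of p] cw_pos[of q] cw_pos[of u] cw_pos[of v] by simp
    show ?thesis by (rule mult_nonneg_nonneg[OF cc I'])
  qed
  finally show ?thesis .
qed

lemma sign_trans: "(a::real) * D > 0 \<Longrightarrow> a * b \<ge> 0 \<Longrightarrow> b * D \<ge> 0"
proof -
  assume h: "a * D > 0" "a * b \<ge> 0"
  have "(a * D) * (b * D) = (a * b) * (D * D)" by (simp add: algebra_simps)
  also have "\<dots> \<ge> 0" using h(2) by simp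
  finally show ?thesis using h(1) by (simp add: zero_le_mult_iff)
qed

lemma key:
  assumes Tf: "farey_adj v w"
    and xy: "x \<noteq> y"
    and o1: "det3 (Vb x) (Vb (emb v)) (Vb (emb w)) * det3 (Vb (emb u)) (Vb (emb v)) (Vb (emb w)) \<le> 0"
    and o2: "det3 (Vb y) (Vb (emb v)) (Vb (emb w)) * det3 (Vb (emb u)) (Vb (emb v)) (Vb (emb w)) \<le> 0"
    and T': "farey_triangle r r2 r3" "z \<in> tri_int (emb r) (emb r2) (emb r3)" "z \<in> geod x y"
  shows "det3 (Vb (emb r)) (Vb (emb v)) (Vb (emb w)) * det3 (Vb (emb u)) (Vb (emb v)) (Vb (emb w)) \<le> 0"
proof (rule ccontr)
  assume c: "\<not> ?thesis"
  define V where "V = Vb (emb v)"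
  define W where "W = Vb (emb w)"
  define D where "D = det3 (Vb (emb u)) V W"
  define R1 where "R1 = Vb (emb r)"
  define R2 where "R2 = Vb (emb r2)"
  define R3 where "R3 = Vb (emb r3)"
  have a12: "farey_adj r r2" and a23: "farey_adj r2 r3" and a31: "farey_adj r3 r"
    using T'(1) unfolding farey_triangle_def by auto
  have d1: "det3 R1 V W * D > 0" using c unfolding R1_def V_def W_def D_def by simp
  have "det3 R1 V W * det3 R2 V W \<ge> 0" unfolding R1_def R2_def V_def W_def
    by (rule noncross[OF a12 Tf])
  then have d2: "det3 R2 V W * D \<ge> 0" using sign_trans d1 by blast
  have "det3 R1 V W * det3 R3 V W \<ge> 0" unfolding R1_def R3_def V_def W_def
    by (rule noncross[OF adj_sym[OF a31] Tf])
  then have d3: "det3 R3 V W * D \<ge> 0" using sign_trans d1 by blast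
  obtain l m where lm: "l > 0" "m > 0" "Pz z = lc l (Vb x) m (Vb y)"
    using geod_param[OF xy T'(3)] by blast
  have "det3 (Pz z) V W * D = l * (det3 (Vb x) V W * D) + m * (det3 (Vb y) V W * D)"
    unfolding lm(3) det3_lc by (simp add: algebra_simps)
  moreover have "l * (det3 (Vb x) V W * D) \<le> 0" using lm(1) o1 unfolding V_def W_def D_def
    by (simp add: mult_nonneg_nonpos)
  moreover have "m * (det3 (Vb y) V W * D) \<le> 0" using lm(2) o2 unfolding V_def W_def D_def
    by (simp add: mult_nonneg_nonpos)
  ultimately have neg: "det3 (Pz z) V W * D \<le> 0" by linarith
  have dist: "emb r \<noteq> emb r2" "emb r2 \<noteq> emb r3" "emb r3 \<noteq> emb r"
    using adj_neq a12 a23 a31 by auto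
  have zt: "det3 (Pz z) R1 R2 * det3 R3 R1 R2 > 0" "det3 (Pz z) R2 R3 * det3 R1 R2 R3 > 0"
    "det3 (Pz z) R3 R1 * det3 R2 R3 R1 > 0"
    using T'(2) unfolding tri_int_eq[OF dist] R1_def R2_def R3_def by auto
  define E where "E = det3 R1 R2 R3"
  have E0: "E \<noteq> 0" unfolding E_def R1_def R2_def R3_def using det_Vb_nz[OF dist] .
  have Ec1: "det3 R2 R3 R1 = E" unfolding E_def by (rule det3_cyc[symmetric])
  have Ec2: "det3 R3 R1 R2 = E" unfolding E_def using det3_cyc[of R1 R2 R3] det3_cyc[of R2 R3 R1] by simp
  define P where "P = Pz z"
  have cP: "det3 R1 P R3 = det3 P R3 R1" "det3 R1 R2 P = det3 P R1 R2"
    using det3_cyc[of R1 P R3] det3_cyc[of R1 R2 P] det3_cyc[of R2 P R1] by simp_all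
  define g1 where "g1 = det3 P R2 R3 / E"
  define g2 where "g2 = det3 P R3 R1 / E"
  define g3 where "g3 = det3 P R1 R2 / E"
  have eP: "P = lc3 g1 R1 g2 R2 g3 R3"
    unfolding g1_def g2_def g3_def cP[symmetric] E_def by (rule cramer) (use E0 E_def in simp)
  have g1: "g1 > 0" unfolding g1_def using zt(2) E0 unfolding E_def P_def by (simp add: div_sign)
  have g2: "g2 > 0" unfolding g2_def using zt(3) E0 Ec1 unfolding E_def P_def by (simp add: div_sign)
  have g3: "g3 > 0" unfolding g3_def using zt(1) E0 Ec2 unfolding E_def P_def by (simp add: div_sign)
  have "det3 P V W * D = g1 * (det3 R1 V W * D) + g2 * (det3 R2 V W * D) + g3 * (det3 R3 V W * D)"
    unfolding eP det3_lc3 by (simp add: algebra_simps)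
  moreover have "g1 * (det3 R1 V W * D) > 0" using g1 d1 by simp
  moreover have "g2 * (det3 R2 V W * D) \<ge> 0" using g2 d2 by simp
  moreover have "g3 * (det3 R3 V W * D) \<ge> 0" using g3 d3 by simp
  ultimately have "det3 P V W * D > 0" by linarith
  then show False using neg unfolding P_def by simp
qed

lemma easy:
  assumes ab: "a \<noteq> b" and dist: "u \<noteq> v" "v \<noteq> w" "w \<noteq> u"
    and o1: "det3 (Vb a) (Vb v) (Vb w) * det3 (Vb u) (Vb v) (Vb w) \<le> 0"
    and o2: "det3 (Vb b) (Vb v) (Vb w) * det3 (Vb u) (Vb v) (Vb w) \<le> 0"
  shows "tri_int u v w \<inter> geod a b = {}"
proof (rule ccontr)
  assume "tri_int u v w \<inter> geod a b \<noteq> {}"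
  then obtain z where z: "z \<in> tri_int u v w" "z \<in> geod a b" by blast
  obtain l m where lm: "l > 0" "m > 0" "Pz z = lc l (Vb a) m (Vb b)"
    using geod_param[OF ab z(2)] by blast
  have "det3 (Pz z) (Vb v) (Vb w) * det3 (Vb u) (Vb v) (Vb w) =
     l * (det3 (Vb a) (Vb v) (Vb w) * det3 (Vb u) (Vb v) (Vb w)) + m * (det3 (Vb b) (Vb v) (Vb w) * det3 (Vb u) (Vb v) (Vb w))"
    unfolding lm(3) det3_lc by (simp add: algebra_simps)
  moreover have "l * (det3 (Vb a) (Vb v) (Vb w) * det3 (Vb u) (Vb v) (Vb w)) \<le> 0" using lm(1) o1
    by (simp add: mult_nonneg_nonpos)
  moreover have "m * (det3 (Vb b) (Vb v) (Vb w) * det3 (Vb u) (Vb v) (Vb w)) \<le> 0" using lm(2) o2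
    by (simp add: mult_nonneg_nonpos)
  moreover have "det3 (Pz z) (Vb v) (Vb w) * det3 (Vb u) (Vb v) (Vb w) > 0"
    using z(1) unfolding tri_int_eq[OF dist] by simp
  ultimately show False by linarith
qed




lemma tri_int_rot: "tri_int u v w = tri_int v w u"
  unfolding tri_int_def by auto

lemma ft_rot: "farey_triangle u v w \<Longrightarrow> farey_triangle v w u"
  unfolding farey_triangle_def by auto

lemma lt_rot: "(u,v,w) \<in> ladder_triangles x y \<Longrightarrow> (v,w,u) \<in> ladder_triangles x y"
  unfolding ladder_triangles_def using ft_rot tri_int_rot by auto

lemma vert_first:
  assumes "r \<in> ladder_vertices x y"
  shows "\<exists>r2 r3. (r,r2,r3) \<in> ladder_triangles x y"
proof -
  obtain u v w where T: "(u,v,w) \<in> ladder_triangles x y" "r \<in> {u,v,w}"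
    using assms unfolding ladder_vertices_def by auto
  then consider "r = u" | "r = v" | "r = w" by auto
  then show ?thesis
  proof cases
    case 1 then show ?thesis using T by blast
  next
    case 2 then show ?thesis using lt_rot[OF T(1)] by blast
  next
    case 3 then show ?thesis using lt_rot[OF lt_rot[OF T(1)]] by blast
  qed
qed

lemma side_case:
  assumes T: "farey_triangle u v w" and xy: "x \<noteq> y" and rs: "emb r \<noteq> emb s"
    and Tr: "(r,r2,r3) \<in> ladder_triangles x y" and Ts: "(s,s2,s3) \<in> ladder_triangles x y"
    and o1: "det3 (Vb x) (Vb (emb v)) (Vb (emb w)) * det3 (Vb (emb u)) (Vb (emb v)) (Vb (emb w)) \<le> 0"
    and o2: "det3 (Vb y) (Vb (emb v)) (Vb (emb w)) * det3 (Vb (emb u)) (Vb (emb v)) (Vb (emb w)) \<le> 0"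
  shows "tri_int (emb u) (emb v) (emb w) \<inter> geod (emb r) (emb s) = {}"
proof -
  have a: "farey_adj u v" "farey_adj v w" "farey_adj w u" using T unfolding farey_triangle_def by auto
  obtain z where z: "farey_triangle r r2 r3" "z \<in> tri_int (emb r) (emb r2) (emb r3)" "z \<in> geod x y"
    using Tr unfolding ladder_triangles_def by auto
  obtain z' where z': "farey_triangle s s2 s3" "z' \<in> tri_int (emb s) (emb s2) (emb s3)" "z' \<in> geod x y"
    using Ts unfolding ladder_triangles_def by auto
  have kr: "det3 (Vb (emb r)) (Vb (emb v)) (Vb (emb w)) * det3 (Vb (emb u)) (Vb (emb v)) (Vb (emb w)) \<le> 0"
    by (rule key[OF a(2) xy o1 o2 z])
  have ks: "det3 (Vb (emb s)) (Vb (emb v)) (Vb (emb w)) * det3 (Vb (emb u)) (Vb (emb v)) (Vb (emb w)) \<le> 0"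
    by (rule key[OF a(2) xy o1 o2 z'])
  show ?thesis by (rule easy[OF rs adj_neq[OF a(1)] adj_neq[OF a(2)] adj_neq[OF a(3)] kr ks])
qed

theorem mainTheorem4:
  fixes x y :: "real option" and r s :: "rat option"
  assumes "x \<noteq> y"
    and "r \<in> ladder_vertices x y" and "s \<in> ladder_vertices x y" and "r \<noteq> s"
  shows "ladder (emb r) (emb s) \<subseteq> ladder x y"
proof -
  obtain r2 r3 where Tr: "(r,r2,r3) \<in> ladder_triangles x y" using vert_first[OF assms(2)] by blast
  obtain s2 s3 where Ts: "(s,s2,s3) \<in> ladder_triangles x y" using vert_first[OF assms(3)] by blast
  have rs: "emb r \<noteq> emb s" using assms(4) unfolding emb_def
    by (cases r; cases s) auto
  have sub: "ladder_triangles (emb r) (emb s) \<subseteq> ladder_triangles x y"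
  proof
    fix T assume T: "T \<in> ladder_triangles (emb r) (emb s)"
    obtain u v w where uvw: "T = (u,v,w)" by (cases T) auto
    have ft: "farey_triangle u v w" and ne: "tri_int (emb u) (emb v) (emb w) \<inter> geod (emb r) (emb s) \<noteq> {}"
      using T uvw unfolding ladder_triangles_def by auto
    have a: "farey_adj u v" "farey_adj v w" "farey_adj w u" using ft unfolding farey_triangle_def by auto
    have dist: "emb u \<noteq> emb v" "emb v \<noteq> emb w" "emb w \<noteq> emb u" using adj_neq a by auto
    have "tri_int (emb u) (emb v) (emb w) \<inter> geod x y \<noteq> {}"
    proof
      assume empty: "tri_int (emb u) (emb v) (emb w) \<inter> geod x y = {}"
      consider "\<not> (det3 (Vb x) (Vb (emb v)) (Vb (emb w)) * det3 (Vb (emb u)) (Vb (emb v)) (Vb (emb w)) > 0 \<or> det3 (Vb y) (Vb (emb v)) (Vb (emb w)) * det3 (Vb (emb u)) (Vb (emb v)) (Vb (emb w)) > 0)"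
        | "\<not> (det3 (Vb x) (Vb (emb w)) (Vb (emb u)) * det3 (Vb (emb v)) (Vb (emb w)) (Vb (emb u)) > 0 \<or> det3 (Vb y) (Vb (emb w)) (Vb (emb u)) * det3 (Vb (emb v)) (Vb (emb w)) (Vb (emb u)) > 0)"
        | "\<not> (det3 (Vb x) (Vb (emb u)) (Vb (emb v)) * det3 (Vb (emb w)) (Vb (emb u)) (Vb (emb v)) > 0 \<or> det3 (Vb y) (Vb (emb u)) (Vb (emb v)) * det3 (Vb (emb w)) (Vb (emb u)) (Vb (emb v)) > 0)"
        using hard[OF assms(1) dist] empty by blast
      then show False
      proof cases
        case 1
        then have o: "det3 (Vb x) (Vb (emb v)) (Vb (emb w)) * det3 (Vb (emb u)) (Vb (emb v)) (Vb (emb w)) \<le> 0"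
          "det3 (Vb y) (Vb (emb v)) (Vb (emb w)) * det3 (Vb (emb u)) (Vb (emb v)) (Vb (emb w)) \<le> 0" by auto
        show False using side_case[OF ft assms(1) rs Tr Ts o] ne by simp
      next
        case 2
        then have o: "det3 (Vb x) (Vb (emb w)) (Vb (emb u)) * det3 (Vb (emb v)) (Vb (emb w)) (Vb (emb u)) \<le> 0"
          "det3 (Vb y) (Vb (emb w)) (Vb (emb u)) * det3 (Vb (emb v)) (Vb (emb w)) (Vb (emb u)) \<le> 0" by auto
        show False using side_case[OF ft_rot[OF ft] assms(1) rs Tr Ts o] ne tri_int_rot by metis
      next
        case 3
        then have o: "det3 (Vb x) (Vb (emb u)) (Vb (emb v)) * det3 (Vb (emb w)) (Vb (emb u)) (Vb (emb v)) \<le> 0"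
          "det3 (Vb y) (Vb (emb u)) (Vb (emb v)) * det3 (Vb (emb w)) (Vb (emb u)) (Vb (emb v)) \<le> 0" by auto
        show False using side_case[OF ft_rot[OF ft_rot[OF ft]] assms(1) rs Tr Ts o] ne tri_int_rot by metis
      qed
    qed
    then show "T \<in> ladder_triangles x y" using ft uvw unfolding ladder_triangles_def by auto
  qed
  show ?thesis unfolding ladder_def using sub by blast
qed


end
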